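(* Let $c>2$ be a constant. For all sufficiently large $n$ and all $p$ with $\frac{c\log n}{n}\le p\le 1$, we have $R(n,p)\ge 1-\frac{1.5}{n}$.
   Context: $\mathcal{G}_{n,p}$ denotes the random directed graph on $n$ vertices in which each ordered pair of distinct vertices is an edge independently with probability $p$. Fix one vertex as the target. $R(n,p)$ is the probability that every vertex of a random graph from $\mathcal{G}_{n,p}$ has a directed path to the target vertex. $\log$ is the natural logarithm. *)

theory Defs
  imports Complex_Main
begin

text \<open>Vertices of a digraph on n vertices are 0,...,n-1; the possible (ordered) edges
  are the pairs of distinct vertices. The target vertex is 0.\<close>

definition possible_edges :: "nat \<Rightarrow> (nat \<times> nat) set" where
  "possible_edges n = {(u, v). u < n \<and> v < n \<and> u \<noteq> v}"

definition all_reach_target :: "nat \<Rightarrow> (nat \<times> nat) set \<Rightarrow> bool" where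
  "all_reach_target n E = (\<forall>v<n. (v, 0) \<in> E\<^sup>*)"

text \<open>Probability of an edge set E under G(n,p): each possible edge present
  independently with probability p.\<close>
definition gnp_prob :: "nat \<Rightarrow> real \<Rightarrow> (nat \<times> nat) set \<Rightarrow> real" where
  "gnp_prob n p E = p ^ card E * (1 - p) ^ (card (possible_edges n) - card E)"

definition R :: "nat \<Rightarrow> real \<Rightarrow> real" where
  "R n p = (\<Sum>E\<in>Pow (possible_edges n). if all_reach_target n E then gnp_prob n p E else 0)"

end

theory Submission
  imports Defs
begin

lemma sum_pow_gnp:
  fixes p :: real
  assumes "finite A"
  shows "(\<Sum>E\<in>Pow A. p ^ card E * (1 - p) ^ (card A - card E)) = 1"
  using assms
proof (induction A rule: finite_induct)
  case empty then show ?case by simp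
next
  case (insert a A)
  let ?g = "\<lambda>E. p ^ card E * (1 - p) ^ (card (insert a A) - card E)"
  have disj: "Pow A \<inter> insert a ` Pow A = {}" using insert by auto
  have inj: "inj_on (insert a) (Pow A)" using insert.hyps(2)
    unfolding inj_on_def by (metis PowD insert_ident subsetD)
  have s1: "(\<Sum>E\<in>Pow A. ?g E) = (1-p) * (\<Sum>E\<in>Pow A. p^card E*(1-p)^(card A - card E))"
    unfolding sum_distrib_left
  proof (rule sum.cong)
    fix E assume "E \<in> Pow A"
    then have "card E \<le> card A" using insert.hyps(1) by (simp add: card_mono)
    then have "card (insert a A) - card E = Suc (card A - card E)" using insert.hyps by simp
    then show "?g E = (1-p) * (p^card E*(1-p)^(card A - card E))" by simp
  qed simp
  have s2: "(\<Sum>E\<in>insert a ` Pow A. ?g E) = p * (\<Sum>E\<in>Pow A. p^card E*(1-p)^(card A - card E))"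
    unfolding sum.reindex[OF inj] sum_distrib_left
  proof (rule sum.cong)
    fix E assume E: "E \<in> Pow A"
    then have "finite E" "a \<notin> E" using insert.hyps finite_subset by auto
    then have "card (insert a E) = Suc (card E)" by simp
    then show "(?g \<circ> insert a) E = p * (p^card E*(1-p)^(card A - card E))" using insert.hyps by simp
  qed simp
  have "Pow (insert a A) = Pow A \<union> insert a ` Pow A" by (rule Pow_insert)
  then have "(\<Sum>E\<in>Pow (insert a A). ?g E) = (\<Sum>E\<in>Pow A. ?g E) + (\<Sum>E\<in>insert a ` Pow A. ?g E)"
    using disj insert.hyps(1) by (simp add: sum.union_disjoint)
  also have "\<dots> = 1" using s1 s2 insert.IH by (simp add: algebra_simps)
  finally show ?case .
qed

lemma sum_avoid:
  fixes p :: real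
  assumes "finite A" "B \<subseteq> A"
  shows "(\<Sum>E\<in>Pow A. if E \<inter> B = {} then p ^ card E * (1 - p) ^ (card A - card E) else 0) = (1-p)^card B"
proof -
  have fin: "finite (Pow A)" using assms by simp
  have eq: "{E \<in> Pow A. E \<inter> B = {}} = Pow (A - B)" by auto
  have cA: "card A = card (A - B) + card B"
    using assms by (metis card_Diff_subset card_mono le_add_diff_inverse2 finite_subset)
  have "(\<Sum>E\<in>Pow A. if E \<inter> B = {} then p ^ card E * (1 - p) ^ (card A - card E) else 0)
      = (\<Sum>E\<in>Pow (A-B). p ^ card E * (1 - p) ^ (card A - card E))"
    using sum.inter_filter[OF fin, of "\<lambda>E. p ^ card E * (1 - p) ^ (card A - card E)" "\<lambda>E. E \<inter> B = {}", symmetric] eq by simp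
  also have "\<dots> = (\<Sum>E\<in>Pow (A-B). (p ^ card E * (1 - p) ^ (card (A-B) - card E)) * (1-p)^card B)"
  proof (rule sum.cong)
    fix E assume "E \<in> Pow (A - B)"
    then have "card E \<le> card (A - B)" using assms by (simp add: card_mono)
    then have "card A - card E = (card (A-B) - card E) + card B" using cA by simp
    then show "p ^ card E * (1 - p) ^ (card A - card E) = (p ^ card E * (1 - p) ^ (card (A-B) - card E)) * (1-p)^card B"
      by (simp add: power_add)
  qed simp
  also have "\<dots> = (1-p)^card B"
    using sum_pow_gnp[of "A - B" p] assms by (simp add: sum_distrib_right[symmetric])
  finally show ?thesis .
qed

lemma finite_PE: "finite (possible_edges n)"
proof -
  have "possible_edges n \<subseteq> {..<n} \<times> {..<n}" unfolding possible_edges_def by auto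
  then show ?thesis by (rule finite_subset) simp
qed

lemma fail_bound:
  fixes p :: real
  assumes p0: "0 \<le> p" and p1: "p \<le> 1"
  shows "1 - R n p \<le> (\<Sum>S\<in>Pow {1..<n} - {{}}. (1-p)^(card S * (n - card S)))"
proof -
  define PE where "PE = possible_edges n"
  define f where "f = gnp_prob n p"
  define F where "F = (\<lambda>S::nat set. S \<times> ({..<n} - S))"
  define SS where "SS = Pow {1..<n} - {{}}"
  have finPE: "finite PE" unfolding PE_def by (rule finite_PE)
  have finPow: "finite (Pow PE)" using finPE by simp
  have finSS: "finite SS" unfolding SS_def by simp
  have fnn: "f E \<ge> 0" for E unfolding f_def gnp_prob_def using p0 p1 by simp
  have tot: "(\<Sum>E\<in>Pow PE. f E) = 1"
    unfolding f_def gnp_prob_def PE_def using sum_pow_gnp[OF finite_PE] by simp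
  have "1 - R n p = (\<Sum>E\<in>Pow PE. f E) - (\<Sum>E\<in>Pow PE. if all_reach_target n E then f E else 0)"
    using tot unfolding R_def f_def PE_def by simp
  also have "\<dots> = (\<Sum>E\<in>Pow PE. if \<not> all_reach_target n E then f E else 0)"
    by (simp add: sum_subtractf[symmetric]) (rule sum.cong, auto)
  also have "\<dots> \<le> (\<Sum>E\<in>Pow PE. \<Sum>S\<in>SS. if E \<inter> F S = {} then f E else 0)"
  proof (rule sum_mono)
    fix E assume EP: "E \<in> Pow PE"
    show "(if \<not> all_reach_target n E then f E else 0) \<le> (\<Sum>S\<in>SS. if E \<inter> F S = {} then f E else 0)"
    proof (cases "all_reach_target n E")
      case True
      then show ?thesis using fnn by (simp add: sum_nonneg)
    next
      case False
      define S where "S = {v. v < n \<and> (v, 0) \<notin> E\<^sup>*}"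
      have "S \<noteq> {}" using False unfolding S_def all_reach_target_def by auto
      moreover have "S \<subseteq> {1..<n}" unfolding S_def
      proof
        fix v assume "v \<in> {v. v < n \<and> (v, 0) \<notin> E\<^sup>*}"
        then have "v < n" "v \<noteq> 0" by (auto intro: gr0I)
        then show "v \<in> {1..<n}" by simp
      qed
      ultimately have SSS: "S \<in> SS" unfolding SS_def by auto
      have "E \<inter> F S = {}"
      proof (rule ccontr)
        assume "E \<inter> F S \<noteq> {}"
        then obtain u v where uv: "(u,v) \<in> E" "u \<in> S" "v < n" "v \<notin> S" unfolding F_def by auto
        then have "(v,0) \<in> E\<^sup>*" unfolding S_def by auto
        with uv(1) have "(u,0) \<in> E\<^sup>*" by (meson converse_rtrancl_into_rtrancl)
        with uv(2) show False unfolding S_def by auto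
      qed
      then have "f E = (if E \<inter> F S = {} then f E else 0)" by simp
      also have "\<dots> \<le> (\<Sum>S\<in>SS. if E \<inter> F S = {} then f E else 0)"
        by (rule member_le_sum[OF SSS]) (simp_all add: fnn finSS)
      finally show ?thesis using False by simp
    qed
  qed
  also have "\<dots> = (\<Sum>S\<in>SS. \<Sum>E\<in>Pow PE. if E \<inter> F S = {} then f E else 0)"
    by (rule sum.swap)
  also have "\<dots> = (\<Sum>S\<in>SS. (1-p)^(card S * (n - card S)))"
  proof (rule sum.cong)
    fix S assume "S \<in> SS"
    then have Ssub: "S \<subseteq> {..<n}" unfolding SS_def by auto
    have FPE: "F S \<subseteq> PE" unfolding F_def PE_def possible_edges_def using Ssub by auto
    have finS: "finite S" using Ssub finite_subset by blast
    have cF: "card (F S) = card S * (n - card S)"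
      unfolding F_def using Ssub finS by (simp add: card_cartesian_product card_Diff_subset)
    show "(\<Sum>E\<in>Pow PE. if E \<inter> F S = {} then f E else 0) = (1-p)^(card S * (n - card S))"
      using sum_avoid[OF finPE FPE, of p] cF unfolding f_def gnp_prob_def PE_def by simp
  qed simp
  finally show ?thesis unfolding SS_def .
qed

lemma group_card:
  fixes g :: "nat \<Rightarrow> real"
  shows "(\<Sum>S\<in>Pow {1..<n} - {{}}. g (card S)) = (\<Sum>k\<in>{1..<n}. real (n - 1 choose k) * g k)"
proof -
  have fin: "finite (Pow {1..<n} - {{}})" by simp
  have img: "card ` (Pow {1..<n} - {{}}) \<subseteq> {1..<n}"
  proof
    fix k assume "k \<in> card ` (Pow {1..<n} - {{}})"
    then obtain S where S: "S \<subseteq> {1..<n}" "S \<noteq> {}" "k = card S" by auto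
    have fS: "finite S" using S(1) finite_subset by blast
    have "card S \<le> card {1..<n}" using S(1) by (intro card_mono) auto
    moreover have "card S \<noteq> 0" using S fS by simp
    ultimately show "k \<in> {1..<n}" using S(3) by auto
  qed
  have "(\<Sum>S\<in>Pow {1..<n} - {{}}. g (card S)) =
      (\<Sum>k\<in>{1..<n}. \<Sum>S\<in>{S \<in> Pow {1..<n} - {{}}. card S = k}. g (card S))"
    by (rule sum.group[OF fin _ img, symmetric]) simp
  also have "\<dots> = (\<Sum>k\<in>{1..<n}. real (n - 1 choose k) * g k)"
  proof (rule sum.cong)
    fix k assume k: "k \<in> {1..<n}"
    have eq: "{S \<in> Pow {1..<n} - {{}}. card S = k} = {B. B \<subseteq> {1..<n} \<and> card B = k}"
      using k by auto
    have "card {B. B \<subseteq> {1..<n} \<and> card B = k} = (n - 1 choose k)"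
      using n_subsets[of "{1..<n}" k] by simp
    then show "(\<Sum>S\<in>{S \<in> Pow {1..<n} - {{}}. card S = k}. g (card S)) = real (n - 1 choose k) * g k"
      unfolding eq by simp
  qed simp
  finally show ?thesis .
qed

lemma term_bound:
  fixes n k :: nat and p c :: real
  assumes n2: "n \<ge> 2" and k: "1 \<le> k" "k < n" and pl: "c * ln (real n) / real n \<le> p" and p1: "p \<le> 1"
  shows "real (n - 1 choose k) * (1-p)^(k*(n-k)) \<le>
     exp (real (min k (n-k)) * ln (real n) - c * ln (real n) / real n * (real (min k (n-k)) * real (n - min k (n-k))))"
proof -
  define m where "m = min k (n-k)"
  define L where "L = ln (real n)"
  have npos: "real n > 0" using n2 by simp
  have c1: "n - 1 choose k \<le> n ^ k"
  proof -
    have "n - 1 choose k \<le> (n-1) ^ k" by (rule binomial_le_pow) (use k in simp)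
    also have "\<dots> \<le> n ^ k" by (rule power_mono) auto
    finally show ?thesis .
  qed
  have c2: "n - 1 choose k \<le> n ^ (n - k)"
  proof -
    have "n - 1 choose k = n - 1 choose (n - 1 - k)" by (rule binomial_symmetric) (use k in simp)
    also have "\<dots> \<le> (n-1) ^ (n - 1 - k)" by (rule binomial_le_pow) simp
    also have "\<dots> \<le> n ^ (n - 1 - k)" by (rule power_mono) auto
    also have "\<dots> \<le> n ^ (n - k)" by (rule power_increasing) (use n2 in auto)
    finally show ?thesis .
  qed
  have cm: "n - 1 choose k \<le> n ^ m" unfolding m_def using c1 c2 by (simp add: min_def)
  have "real (n - 1 choose k) \<le> real n ^ m" using cm by (metis of_nat_le_iff of_nat_power)
  also have "\<dots> = exp (real m * L)" unfolding L_def using npos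
    by (simp add: exp_of_nat_mult)
  finally have cb: "real (n - 1 choose k) \<le> exp (real m * L)" .
  have km: "k * (n - k) = m * (n - m)" unfolding m_def using k by (simp add: min_def mult.commute)
  have "(1-p)^(k*(n-k)) \<le> exp (-p) ^ (k*(n-k))"
    by (rule power_mono) (use p1 exp_ge_add_one_self[of "-p"] in auto)
  also have "\<dots> = exp (real (m*(n-m)) * (-p))" unfolding km exp_of_nat_mult[symmetric] by simp
  also have "\<dots> \<le> exp (real (m*(n-m)) * (- (c * L / real n)))"
    using pl unfolding L_def by (intro exp_le_cancel_iff[THEN iffD2] mult_left_mono) auto
  finally have eb: "(1-p)^(k*(n-k)) \<le> exp (real (m*(n-m)) * (- (c * L / real n)))" .
  have "real (n - 1 choose k) * (1-p)^(k*(n-k)) \<le> exp (real m * L) * exp (real (m*(n-m)) * (- (c * L / real n)))"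
    by (rule mult_mono[OF cb eb]) (use p1 in auto)
  also have "\<dots> = exp (real m * L - c * L / real n * (real m * real (n - m)))"
    by (simp add: exp_add[symmetric] algebra_simps del: of_nat_mult add: of_nat_mult[symmetric])
  finally show ?thesis unfolding m_def L_def .
qed

lemma expo_large:
  fixes m n L c d K :: real
  assumes L: "L > 0" and n: "n > 0" and m2: "2 * m \<le> n" and mK: "K \<le> m" and d: "d = c/2 - 1"
    and dK: "3 \<le> d * K" and c: "c > 2"
  shows "m * L - c * L / n * (m * (n - m)) \<le> -3 * L"
proof -
  have eq: "m * L - c * L / n * (m * (n - m)) = m * L * (1 - c * (n - m) / n)"
    using n by (simp add: field_simps)
  have X: "c * (n - m) / n \<ge> c / 2"
    using n m2 c by (simp add: field_simps)
  have "K > 0" using zero_less_mult_pos[of d K] dK d c by simp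
  then have m0: "m \<ge> 0" using mK by simp
  have "m * L * (1 - c * (n - m) / n) \<le> m * L * (- d)"
    using X d m0 L by (intro mult_left_mono) auto
  also have "\<dots> = - (d * m) * L" by simp
  also have "\<dots> \<le> - (d * K) * L"
    using mK d c L by (intro mult_right_mono) (auto intro!: mult_left_mono)
  also have "\<dots> \<le> -3 * L" using dK L by (intro mult_right_mono) auto
  finally show ?thesis using eq by simp
qed

lemma expo_small:
  fixes m n L c d K :: real
  assumes L: "L > 0" and n: "n > 0" and m1: "1 \<le> m" and mK: "m < K" and d: "d = c/2 - 1"
    and nK: "c * K / d \<le> n" and c: "c > 2"
  shows "m * L - c * L / n * (m * (n - m)) \<le> -(1 + d) * L"
proof -
  have eq: "m * L - c * L / n * (m * (n - m)) = m * L * (1 - c * (n - m) / n)"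
    using n by (simp add: field_simps)
  have dpos: "d > 0" using d c by simp
  have "c * K \<le> d * n" using nK dpos by (simp add: field_simps)
  then have "c * m \<le> d * n" using mK c
    by (smt (verit, best) mult_strict_left_mono)
  then have X: "c * (n - m) / n \<ge> 1 + c / 2"
    using n d by (simp add: field_simps)
  have "m * L * (1 - c * (n - m) / n) \<le> m * L * (- (1 + d))"
    using X d m1 L by (intro mult_left_mono) auto
  also have "\<dots> = - ((1 + d) * m) * L" by (simp add: algebra_simps)
  also have "\<dots> \<le> - ((1 + d) * 1) * L"
  proof -
    have "(1 + d) * 1 \<le> (1 + d) * m" using m1 dpos by (intro mult_left_mono) auto
    then show ?thesis using L by (intro mult_right_mono) auto
  qed
  finally show ?thesis using eq by simp
qed

theorem lemma22:
  fixes c :: real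
  assumes "c > 2"
  shows "\<exists>N::nat. \<forall>n\<ge>N. \<forall>p::real. c * ln (real n) / real n \<le> p \<and> p \<le> 1 \<longrightarrow>
           R n p \<ge> 1 - 1.5 / real n"
proof -
  define d where "d = c/2 - 1"
  have dpos: "d > 0" using assms d_def by simp
  obtain K :: nat where K: "3 / d < real K" using reals_Archimedean2 by blast
  have dK: "3 \<le> d * real K" using K dpos by (simp add: field_simps)
  have Kpos: "real K > 0" using K dpos by (smt (verit) divide_pos_pos)
  obtain N :: nat where N: "max 2 (max (c * K / d) (exp (ln (4 * real K) / d))) < real N"
    using reals_Archimedean2 by blast
  show ?thesis
  proof (intro exI allI impI)
    fix n :: nat and p :: real
    assume nN: "N \<le> n" and pp: "c * ln (real n) / real n \<le> p \<and> p \<le> 1"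
    then have pl: "c * ln (real n) / real n \<le> p" and p1: "p \<le> 1" by auto
    have nN': "real N \<le> real n" using nN by simp
    have n2: "n \<ge> 2" using N nN' by simp
    have npos: "real n > 0" using n2 by simp
    define L where "L = ln (real n)"
    have Lpos: "L > 0" unfolding L_def using n2 by simp
    have nK: "c * K / d \<le> real n" using N nN' by simp
    have nE: "exp (ln (4 * real K) / d) \<le> real n" using N nN' by simp
    have p0: "0 \<le> p"
      using pl Lpos npos assms unfolding L_def by (smt (verit) divide_pos_pos mult_pos_pos)
    define a where "a = exp (- (1 + d) * L)"
    define b where "b = exp (-3 * L)"
    have tmb: "real (n - 1 choose k) * (1-p)^(k*(n-k)) \<le> (if min k (n-k) < K then a else 0) + b"
      if k: "k \<in> {1..<n}" for k
    proof -
      define m where "m = min k (n-k)"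
      have tb: "real (n - 1 choose k) * (1-p)^(k*(n-k)) \<le>
          exp (real m * L - c * L / real n * (real m * real (n - m)))"
        unfolding m_def L_def by (rule term_bound[OF n2 _ _ pl p1]) (use k in auto)
      have "2 * m \<le> n" unfolding m_def using k by (auto simp: min_def)
      then have m2: "2 * real m \<le> real n" by linarith
      have "1 \<le> m" unfolding m_def using k by (auto simp: min_def)
      then have m1: "1 \<le> real m" by simp
      have rnm: "real (n - m) = real n - real m" unfolding m_def using k by (simp add: min_def)
      have ap: "a \<ge> 0" "b \<ge> 0" unfolding a_def b_def by auto
      show ?thesis
      proof (cases "m < K")
        case True
        have "real m < real K" using True by simp
        from expo_small[OF Lpos npos m1 this d_def nK assms]
        have "exp (real m * L - c * L / real n * (real m * real (n - m))) \<le> a"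
          unfolding a_def rnm by simp
        then show ?thesis using tb True ap unfolding m_def by simp
      next
        case False
        have "real K \<le> real m" using False by simp
        from expo_large[OF Lpos npos m2 this d_def dK assms]
        have "exp (real m * L - c * L / real n * (real m * real (n - m))) \<le> b"
          unfolding b_def rnm by simp
        then show ?thesis using tb False ap unfolding m_def by simp
      qed
    qed
    have "1 - R n p \<le> (\<Sum>S\<in>Pow {1..<n} - {{}}. (1-p)^(card S * (n - card S)))"
      by (rule fail_bound[OF p0 p1])
    also have "\<dots> = (\<Sum>k\<in>{1..<n}. real (n - 1 choose k) * (1-p)^(k*(n-k)))"
      by (rule group_card)
    also have "\<dots> \<le> (\<Sum>k\<in>{1..<n}. (if min k (n-k) < K then a else 0) + b)"
      by (rule sum_mono) (rule tmb)
    also have "\<dots> = real (card {k \<in> {1..<n}. min k (n-k) < K}) * a + real (n - 1) * b"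
      by (simp add: sum.distrib sum.inter_filter[symmetric])
    also have "\<dots> \<le> real (2 * K) * a + real n * b"
    proof -
      have "{k \<in> {1..<n}. min k (n-k) < K} \<subseteq> {..<K} \<union> {n-K..<n}" by auto
      then have "card {k \<in> {1..<n}. min k (n-k) < K} \<le> card ({..<K} \<union> {n-K..<n})"
        by (intro card_mono) auto
      also have "\<dots> \<le> card {..<K} + card {n-K..<n}" by (rule card_Un_le)
      also have "\<dots> \<le> 2 * K" by simp
      finally have "real (card {k \<in> {1..<n}. min k (n-k) < K}) \<le> real (2 * K)" by linarith
      moreover have "a \<ge> 0" "b \<ge> 0" unfolding a_def b_def by auto
      ultimately show ?thesis by (intro add_mono mult_right_mono) auto
    qed
    also have "\<dots> \<le> 1.5 / real n"
    proof -
      have eL: "exp (- L) = 1 / real n" unfolding L_def unfolding exp_minus using npos by (simp add: inverse_eq_divide)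
      have "ln (4 * real K) / d \<le> L"
      proof -
        have "ln (exp (ln (4 * real K) / d)) \<le> ln (real n)"
          using nE npos by (subst ln_le_cancel_iff) auto
        then show ?thesis unfolding L_def by simp
      qed
      then have "ln (4 * real K) \<le> d * L" using dpos by (simp add: field_simps)
      then have "exp (- (d * L)) \<le> exp (- ln (4 * real K))" by simp
      also have "\<dots> = 1 / (4 * real K)" unfolding exp_minus using Kpos by (simp add: inverse_eq_divide)
      finally have edl: "exp (- (d * L)) \<le> 1 / (4 * real K)" .
      have "a = exp (- (d * L)) * exp (- L)" unfolding a_def by (simp add: exp_add[symmetric] algebra_simps)
      then have aeq: "a = exp (- (d * L)) / real n" using eL by simp
      have "b = exp (- L) ^ 3" unfolding b_def by (simp add: exp_of_nat_mult[symmetric])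
      then have beq: "b = 1 / real n ^ 3" using eL by (simp add: power_divide)
      have t1: "real (2 * K) * a \<le> 0.5 / real n"
      proof -
        have "real (2 * K) * a = 2 * real K * exp (- (d * L)) / real n" using aeq by simp
        also have "\<dots> \<le> 2 * real K * (1 / (4 * real K)) / real n"
          using edl Kpos npos by (intro divide_right_mono mult_left_mono) auto
        also have "\<dots> = 0.5 / real n" using Kpos by simp
        finally show ?thesis .
      qed
      have t2: "real n * b \<le> 1 / real n"
      proof -
        have "real n * b = 1 / (real n * real n)" using beq npos by (simp add: power3_eq_cube)
        also have "\<dots> \<le> 1 / real n" using n2 npos by (simp add: field_simps)
        finally show ?thesis .
      qed
      show ?thesis using t1 t2 by simp
    qed
    finally show "R n p \<ge> 1 - 1.5 / real n" by simp
  qed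
qed

end
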